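(* Let $r>5$ with $r\not\equiv 0\pmod 3$, and let $C_r$ be the directed cycle of length $r$. If there exist positive integers $b,k$ with $k<4b$ such that $C_r$ admits a $b$-fold oriented $k$-coloring, then $r$ is divisible by $4q+3$ for some natural number $q$.
   Context: The directed cycle $C_r$ has vertices $u_i$, $i\in\mathbb{Z}/r\mathbb{Z}$, and arcs $u_iu_{i+1}$. For a set $S$ of $k$ colors, a $b$-fold oriented $k$-coloring of an oriented graph $G$ is a map $f$ from $V(G)$ to the $b$-element subsets of $S$ such that (i) $f(x)\cap f(y)=\emptyset$ for every arc $xy$, and (ii) for all arcs $xy, zw$, $f(x)\cap f(w)\neq\emptyset$ implies $f(y)\cap f(z)=\emptyset$. (A $b$-fold oriented $k$-coloring with $k/b<4$ is called miser in the paper.) *)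

theory Defs
  imports Main
begin

definition cycle_vertices :: "nat \<Rightarrow> nat set" where
  "cycle_vertices r = {..<r}"

definition cycle_arcs :: "nat \<Rightarrow> (nat \<times> nat) set" where
  "cycle_arcs r = {(i, (i + 1) mod r) | i. i < r}"

definition b_fold_oriented_coloring ::
  "'a set \<Rightarrow> ('a \<times> 'a) set \<Rightarrow> 'c set \<Rightarrow> nat \<Rightarrow> ('a \<Rightarrow> 'c set) \<Rightarrow> bool" where
  "b_fold_oriented_coloring V A S b f \<longleftrightarrow>
     (\<forall>x\<in>V. f x \<subseteq> S \<and> finite (f x) \<and> card (f x) = b) \<and>
     (\<forall>(x, y)\<in>A. f x \<inter> f y = {}) \<and>
     (\<forall>(x, y)\<in>A. \<forall>(z, w)\<in>A. f x \<inter> f w \<noteq> {} \<longrightarrow> f y \<inter> f z = {})"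

end

theory Submission
  imports Defs
begin

lemma mod4a: "(x + 1) mod 4 = (0::nat) \<Longrightarrow> x mod 4 = 3" by presburger
lemma mod4b: "(x + 2) mod 4 = (1::nat) \<Longrightarrow> x mod 4 = 3" by presburger
lemma mod4c: "(x + 2) mod 4 = (2::nat) \<Longrightarrow> x mod 4 = 0" by presburger
lemma mod4d: "(p::nat) mod 4 = 3 \<Longrightarrow> 4 * (p div 4) + 3 = p" by presburger

locale ctx =
  fixes r b k :: nat and f :: "nat \<Rightarrow> nat set"
  assumes rpos: "r > 0" and bpos: "b > 0" and kb: "k < 4 * b"
  and col: "b_fold_oriented_coloring (cycle_vertices r) (cycle_arcs r) {..<k} b f"
begin

definition F :: "nat \<Rightarrow> nat set" where "F i = f (i mod r)"
definition R :: "nat \<Rightarrow> nat \<Rightarrow> bool" where "R i j \<longleftrightarrow> F i \<inter> F j \<noteq> {}"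

lemma Fprops: "F i \<subseteq> {..<k}" "finite (F i)" "card (F i) = b"
  using col rpos unfolding b_fold_oriented_coloring_def F_def cycle_vertices_def by auto

lemma arcin: "(i mod r, Suc i mod r) \<in> cycle_arcs r"
  unfolding cycle_arcs_def using rpos by (auto simp: mod_Suc_eq)

lemma arc: "F i \<inter> F (Suc i) = {}"
  using col arcin[of i] unfolding b_fold_oriented_coloring_def F_def by blast

lemma B: "\<not> (R a (Suc c) \<and> R (Suc a) c)"
proof -
  have "\<forall>(x, y)\<in>cycle_arcs r. \<forall>(z, w)\<in>cycle_arcs r. f x \<inter> f w \<noteq> {} \<longrightarrow> f y \<inter> f z = {}"
    using col unfolding b_fold_oriented_coloring_def by blast
  then have "f (a mod r) \<inter> f (Suc c mod r) \<noteq> {} \<longrightarrow> f (Suc a mod r) \<inter> f (c mod r) = {}"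
    using arcin[of a] arcin[of c] by fast
  then show ?thesis unfolding R_def F_def by blast
qed

lemma K4: "R w x \<or> R w y \<or> R w z \<or> R x y \<or> R x z \<or> R y z"
proof (rule ccontr)
  assume "\<not> ?thesis"
  then have d: "F w \<inter> F x = {}" "F w \<inter> F y = {}" "F w \<inter> F z = {}" "F x \<inter> F y = {}"
    "F x \<inter> F z = {}" "F y \<inter> F z = {}" unfolding R_def by auto
  have c1: "card (F w \<union> F x) = card (F w) + card (F x)"
    using d Fprops(2) by (simp add: card_Un_disjoint)
  have c2: "card (F w \<union> F x \<union> F y) = card (F w \<union> F x) + card (F y)"
    using d Fprops(2) by (intro card_Un_disjoint) auto
  have c3: "card (F w \<union> F x \<union> F y \<union> F z) = card (F w \<union> F x \<union> F y) + card (F z)"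
    using d Fprops(2) by (intro card_Un_disjoint) auto
  have "card (F w \<union> F x \<union> F y \<union> F z) = card (F w) + card (F x) + card (F y) + card (F z)"
    using c1 c2 c3 by simp
  also have "\<dots> = 4 * b" using Fprops(3) by simp
  finally have "4 * b \<le> card {..<k}"
    by (metis Fprops(1) card_mono finite_lessThan le_sup_iff)
  then show False using kb by simp
qed

lemma Rsym: "R i j = R j i" unfolding R_def by blast
lemma Rrefl: "R i i"
  using Fprops(3)[of i] bpos unfolding R_def by auto
lemma Fr: "F (i + r) = F i" unfolding F_def by simp
lemma Fmr: "F (i * r) = F 0" unfolding F_def by simp
lemma Fmr2: "F (i * r + d) = F d" unfolding F_def by simp
lemma N1: "\<not> R i (Suc i)" using arc unfolding R_def by blast
lemma N2: "\<not> R i (i + 2)"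
  using B[of i "Suc i"] Rrefl[of "Suc i"] by simp

lemma L:
  assumes "R i y" "R (Suc i) y" shows "R (Suc i) (Suc y)"
proof (rule ccontr)
  assume a: "\<not> R (Suc i) (Suc y)"
  define x where "x = i + r - 1"
  have sx: "Suc x = i + r" using rpos unfolding x_def by simp
  have ssx: "Suc (Suc x) = Suc i + r" using sx by simp
  have e1: "R (Suc x) y" using assms(1) unfolding sx R_def Fr .
  have e2: "R (Suc (Suc x)) y" using assms(2) unfolding ssx R_def Fr .
  have e3: "\<not> R (Suc (Suc x)) (Suc y)" using a unfolding ssx R_def Fr .
  have n1: "\<not> R x (Suc y)" using B[of x y] e1 by blast
  have n2: "\<not> R (Suc x) (Suc y)" using B[of "Suc x" y] e2 by blast
  show False using K4[of x "Suc x" "Suc (Suc x)" "Suc y"] N1[of x] N1[of "Suc x"] N2[of x]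
      n1 n2 e3 by (simp add: numeral_2_eq_2)
qed

definition s :: "nat \<Rightarrow> bool" where "s d = R 0 d"

lemma chain: "R i (i + d) \<Longrightarrow> (\<And>i. R i (i + d) \<Longrightarrow> R (Suc i) (Suc i + d)) \<Longrightarrow> R (i + j) (i + j + d)"
  by (induction j) auto

lemma V: "R i (i + d) = s d"
proof (induction d arbitrary: i rule: less_induct)
  case (less d)
  show ?case
  proof (cases d)
    case 0
    then show ?thesis using Rrefl unfolding s_def by simp
  next
    case (Suc d1)
    show ?thesis
    proof (cases d1)
      case 0
      then show ?thesis using N1 Suc unfolding s_def by simp
    next
      case (Suc e)
      have d: "d = Suc (Suc e)" using \<open>d = Suc d1\<close> Suc by simp
      have IH1: "\<And>i. R i (i + Suc e) = s (Suc e)" using less.IH[of "Suc e"] d by simp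
      have IH0: "\<And>i. R i (i + e) = s e" using less.IH[of e] d by simp
      show ?thesis
      proof (cases "s (Suc e)")
        case True
        have step: "\<And>i. R i (i + d) \<Longrightarrow> R (Suc i) (Suc i + d)"
        proof -
          fix i assume h: "R i (i + d)"
          have "R (Suc i) (i + d)" using IH1[of "Suc i"] True d by simp
          then have "R (Suc i) (Suc (i + d))" using L h by blast
          then show "R (Suc i) (Suc i + d)" by simp
        qed
        show ?thesis
        proof
          assume h: "R i (i + d)"
          have "R (i + (i * r - i)) (i + (i * r - i) + d)" using chain[OF h step] .
          moreover have "i + (i * r - i) = i * r" using rpos
            by (metis add_diff_inverse_nat less_one mult.commute mult_le_mono2 nat_less_le not_less_eq_eq
                  mult_1 Suc_leI)
          ultimately show "s d" unfolding s_def R_def using Fmr Fmr2 by simp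
        next
          assume "s d"
          then have "R 0 (0 + d)" unfolding s_def by simp
          from chain[OF this step] show "R i (i + d)" by simp
        qed
      next
        case False
        note F1 = False
        show ?thesis
        proof (cases "s e")
          case True
          have "\<And>i. \<not> R i (i + d)"
          proof -
            fix i
            have "R (Suc i) (Suc i + e)" using IH0 True by blast
            then show "\<not> R i (i + d)" using B[of i "Suc i + e"] d by simp
          qed
          then show ?thesis unfolding s_def by (metis add_0)
        next
          case False
          have "\<And>i. R i (i + d)"
          proof -
            fix i
            show "R i (i + d)"
              using K4[of i "i + e" "i + Suc e" "i + d"] IH0[of i] IH1[of i] False F1
                N1[of "i + e"] N1[of "i + Suc e"] N2[of "i + e"] d
              by (simp add: numeral_2_eq_2)
          qed
          then show ?thesis unfolding s_def by (metis add_0)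
        qed
      qed
    qed
  qed
qed

lemma s0: "s 0" using Rrefl unfolding s_def by simp
lemma s1: "\<not> s 1" using N1[of 0] unfolding s_def by simp
lemma SB: "\<not> (s d \<and> s (d + 2))"
  using B[of 0 "Suc d"] V[of 1 d] unfolding s_def by (auto simp: numeral_2_eq_2)
lemma SK: "s a \<or> s (a + x) \<or> s (a + x + y) \<or> s x \<or> s (x + y) \<or> s y"
  using K4[of 0 a "a + x" "a + x + y"] V[of a x] V[of a "x + y"] V[of "a + x" y]
  unfolding s_def by (simp add: add.assoc eval_nat_numeral)
lemma s_per: "s (d + r) = s d" unfolding s_def R_def using Fr by simp
lemma s_sym: "d \<le> r \<Longrightarrow> s (r - d) = s d"
proof -
  assume "d \<le> r"
  have "s (r - d) = R d (d + (r - d))" using V by simp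
  also have "\<dots> = R d r" using \<open>d \<le> r\<close> by simp
  also have "\<dots> = R 0 d" unfolding R_def using Fr[of 0] Rsym by (simp add: Int_commute)
  finally show ?thesis unfolding s_def .
qed


lemma s2: "\<not> s 2" using SB[of 0] s0 by (simp add: numeral_2_eq_2)

definition sing :: "nat \<Rightarrow> bool" where
  "sing p \<longleftrightarrow> 0 < p \<and> s p \<and> \<not> s (p - 1) \<and> \<not> s (Suc p)"

lemma sing_ge3: "sing p \<Longrightarrow> 3 \<le> p"
proof (rule ccontr)
  assume a: "sing p" "\<not> 3 \<le> p"
  then have "p = 1 \<or> p = 2" unfolding sing_def by auto
  then show False using a(1) s1 s2 unfolding sing_def by auto
qed

lemma per:
  assumes sp: "sing p" shows "s (d + p) = s d"
proof (induction d rule: less_induct)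
  case (less d)
  have p3: "3 \<le> p" using sing_ge3 sp .
  have spp: "s p" "\<not> s (p - 1)" "\<not> s (Suc p)" using sp unfolding sing_def by auto
  have "d = 0 \<or> d = 1 \<or> d = (d - 2) + 2" by arith
  then consider "d = 0" | "d = 1" | e where "d = e + 2" by blast
  then show ?case
  proof cases
    case 1 then show ?thesis using spp s0 by simp
  next
    case 2 then show ?thesis using spp s1 by simp
  next
    case (3 e)
    note d = 3
    have IH0: "s (e + p) = s e" using less.IH[of e] d by simp
    have IH1: "s (e + 1 + p) = s (e + 1)" using less.IH[of "e + 1"] d by simp
    have eqd: "d + p = e + p + 2" using d by simp
    show ?thesis
    proof (cases "s e")
      case True
      have x1: "\<not> s (e + 2)" using SB[of e] True by blast
      have x2: "\<not> s (e + p + 2)" using SB[of "e + p"] True IH0 by blast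
      show ?thesis using x1 x2 d by (simp add: ac_simps)
    next
      case F0: False
      show ?thesis
      proof (cases "s (e + 1)")
        case False
        have a: "s (e + 2)" using SK[of e 1 1] F0 False s1 s2 by (simp add: add.assoc numeral_2_eq_2)
        have b: "s (e + p + 2)" using SK[of "e + p" 1 1] F0 False s1 s2 IH0 IH1
          by (simp add: ac_simps numeral_2_eq_2)
        show ?thesis using a b d by (simp add: ac_simps)
      next
        case T1: True
        have n2: "\<not> s (e + 3)" using SB[of "e + 1"] T1 by (simp add: add.assoc numeral_2_eq_2 numeral_3_eq_3)
        show ?thesis
        proof (cases "s (e + 2)")
          case True
          have pe: "p - 2 + 2 = p" using p3 by simp
          have n1: "\<not> s (p - 2)" using SB[of "p - 2"] spp unfolding pe by blast
          have n3: "\<not> s (e + 4)" using SB[of "e + 2"] True by (simp add: add.assoc eval_nat_numeral)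
          have eq1: "p - 2 + 1 = p - 1" using p3 by simp
          have eq2: "p - 1 + (e + 3) = e + p + 2" using p3 by simp
          have eq3: "1 + (e + 3) = e + 4" by simp
          have "s (p - 2) \<or> s (p - 2 + 1) \<or> s (p - 2 + 1 + (e + 3)) \<or> s 1 \<or> s (1 + (e + 3)) \<or> s (e + 3)"
            using SK[of "p - 2" 1 "e + 3"] .
          then have "s (e + p + 2)" unfolding eq1 eq2 eq3 using n1 n2 n3 spp(2) s1 by blast
          then show ?thesis using True d by (simp add: ac_simps)
        next
          case False
          have n4: "\<not> s (e + p + 3)"
          proof -
            have "s (e + 1 + p)" using IH1 T1 by simp
            moreover have "e + 1 + p + 2 = e + p + 3" by simp
            ultimately show ?thesis using SB[of "e + 1 + p"] by metis
          qed
          have "\<not> s (e + p + 2)"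
          proof
            assume h: "s (e + p + 2)"
            have n5: "\<not> s (e + p + 4)" using SB[of "e + p + 2"] h by (simp add: add.assoc eval_nat_numeral)
            have eq4: "1 + (e + 2) = e + 3" "e + 3 + (p + 1) = e + p + 4"
              "e + 2 + (p + 1) = e + p + 3" by simp_all
            have "s 1 \<or> s (1 + (e + 2)) \<or> s (1 + (e + 2) + (p + 1)) \<or> s (e + 2) \<or> s (e + 2 + (p + 1)) \<or> s (p + 1)"
              using SK[of 1 "e + 2" "p + 1"] .
            moreover have "\<not> s (p + 1)" using spp(3) by simp
            ultimately show False unfolding eq4 using s1 n2 n5 False n4 by blast
          qed
          then show ?thesis using False d by (simp add: ac_simps)
        qed
      qed
    qed
  qed
qed

lemma perm: "sing p \<Longrightarrow> s (d + j * p) = s d"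
proof (induction j)
  case 0 then show ?case by simp
next
  case (Suc j)
  have "s (d + Suc j * p) = s ((d + j * p) + p)" by (simp add: algebra_simps)
  also have "\<dots> = s (d + j * p)" using per[OF Suc.prems] .
  finally show ?case using Suc by simp
qed

lemma pattern:
  assumes sp: "sing p" and mn: "\<And>m. sing m \<Longrightarrow> p \<le> m"
  shows "d < p \<Longrightarrow> s d = (d mod 4 = 0 \<or> d mod 4 = 3)"
proof (induction d rule: less_induct)
  case (less d)
  show ?case
  proof (cases "d < 3")
    case True
    then have "d = 0 \<or> d = 1 \<or> d = 2" by auto
    then show ?thesis using s0 s1 s2 by auto
  next
    case False
    then obtain e where d: "d = e + 3" by (metis add.commute le_Suc_ex not_less)
    have lt1: "e + 1 < d" "e + 1 < p" using d less.prems by simp_all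
    have lt2: "e + 2 < d" "e + 2 < p" using d less.prems by simp_all
    have I1: "s (e + 1) = ((e + 1) mod 4 = 0 \<or> (e + 1) mod 4 = 3)" using less.IH[OF lt1] .
    have I2: "s (e + 2) = ((e + 2) mod 4 = 0 \<or> (e + 2) mod 4 = 3)" using less.IH[OF lt2] .
    consider "d mod 4 = 0" | "d mod 4 = 1" | "d mod 4 = 2" | "d mod 4 = 3" by arith
    then show ?thesis
    proof cases
      case 1
      have m: "(e + 2) mod 4 = 3" "(e + 1) mod 4 = 2" using 1 d by presburger+
      have a: "s (e + 2)" "\<not> s (e + 1)" using I1 I2 m by simp_all
      have "s (e + 3)"
      proof (rule ccontr)
        assume "\<not> s (e + 3)"
        then have "sing (e + 2)" using a unfolding sing_def by (simp add: eval_nat_numeral)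
        then have "p \<le> e + 2" by (rule mn)
        then show False using lt2 by simp
      qed
      then show ?thesis using 1 d by simp
    next
      case 2
      have m: "(e + 1) mod 4 = 3" using 2 d by presburger
      have "s (e + 1)" using I1 m by simp
      then have "\<not> s (e + 3)" using SB[of "e + 1"] by (simp add: eval_nat_numeral)
      then show ?thesis using 2 d by simp
    next
      case 3
      have m: "(e + 1) mod 4 = 0" using 3 d by presburger
      have "s (e + 1)" using I1 m by simp
      then have "\<not> s (e + 3)" using SB[of "e + 1"] by (simp add: eval_nat_numeral)
      then show ?thesis using 3 d by simp
    next
      case 4
      have m: "(e + 2) mod 4 = 2" "(e + 1) mod 4 = 1" using 4 d by presburger+
      have a: "\<not> s (e + 1)" "\<not> s (e + 2)" using I1 I2 m by simp_all
      have "s (e + 3)" using SK[of "e + 1" 1 1] a s1 s2 by (simp add: eval_nat_numeral)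
      then show ?thesis using 4 d by simp
    qed
  qed
qed

lemma main: "\<exists>q. (4 * q + 3) dvd r"
proof -
  have sr: "sing r"
    using rpos s0 s1 s_per[of 0] s_per[of 1] s_sym[of 1] rpos unfolding sing_def by simp
  define p where "p = (LEAST p. sing p)"
  have sp: "sing p" unfolding p_def using LeastI[of sing r] sr .
  have mn: "\<And>m. sing m \<Longrightarrow> p \<le> m" unfolding p_def by (rule Least_le)
  have p3: "3 \<le> p" using sing_ge3 sp .
  have spp: "s p" "\<not> s (p - 1)" "\<not> s (Suc p)" using sp unfolding sing_def by auto
  have dv: "p dvd r"
  proof (rule ccontr)
    assume nd: "\<not> p dvd r"
    define m where "m = r mod p"
    define j where "j = r div p"
    have m0: "0 < m" using nd unfolding m_def by (simp add: dvd_eq_mod_eq_0)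
    have mp: "m < p" using p3 unfolding m_def by simp
    have rr: "r = m + j * p" unfolding m_def j_def by simp
    have "s m = s r" using perm[OF sp, of m j] rr by simp
    also have "\<dots> = s 0" using s_per[of 0] by simp
    finally have a: "s m" using s0 by simp
    have "s (Suc m) = s (Suc r)" using perm[OF sp, of "Suc m" j] rr by simp
    also have "\<dots> = s 1" using s_per[of 1] by simp
    finally have b: "\<not> s (Suc m)" using s1 by simp
    have "s (m - 1) = s (r - 1)" using perm[OF sp, of "m - 1" j] rr m0 by simp
    also have "\<dots> = s 1" using s_sym[of 1] rpos by simp
    finally have c: "\<not> s (m - 1)" using s1 by simp
    have "sing m" using a b c m0 unfolding sing_def by simp
    then have "p \<le> m" by (rule mn)
    then show False using mp by simp
  qed
  have pm: "p mod 4 = 3"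
  proof -
    consider "p mod 4 = 0" | "p mod 4 = 1" | "p mod 4 = 2" | "p mod 4 = 3" by arith
    then show ?thesis
    proof cases
      case 1
      have pe: "(p - 1) + 1 = p" using p3 by simp
      have "((p - 1) + 1) mod 4 = 0" unfolding pe using 1 .
      then have "(p - 1) mod 4 = 3" by (rule mod4a)
      then have "s (p - 1)" using pattern[OF sp mn, of "p - 1"] p3 by simp
      then show ?thesis using spp by simp
    next
      case 2
      have pe: "(p - 2) + 2 = p" using p3 by simp
      have "((p - 2) + 2) mod 4 = 1" unfolding pe using 2 .
      then have "(p - 2) mod 4 = 3" by (rule mod4b)
      then have "s (p - 2)" using pattern[OF sp mn, of "p - 2"] p3 by simp
      then show ?thesis using spp SB[of "p - 2"] unfolding pe by blast
    next
      case 3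
      have pe: "(p - 2) + 2 = p" using p3 by simp
      have "((p - 2) + 2) mod 4 = 2" unfolding pe using 3 .
      then have "(p - 2) mod 4 = 0" by (rule mod4c)
      then have "s (p - 2)" using pattern[OF sp mn, of "p - 2"] p3 by simp
      then show ?thesis using spp SB[of "p - 2"] unfolding pe by blast
    qed
  qed
  have "4 * (p div 4) + 3 = p" using pm by (rule mod4d)
  then show ?thesis using dv by metis
qed

end

theorem lemma8:
  fixes r b k :: nat
  assumes "r > 5" and "\<not> (3 dvd r)"
    and "b > 0" and "k > 0" and "k < 4 * b"
    and "\<exists>f :: nat \<Rightarrow> nat set.
           b_fold_oriented_coloring (cycle_vertices r) (cycle_arcs r) {..<k} b f"
  shows "\<exists>q :: nat. (4 * q + 3) dvd r"
proof -
  obtain f :: "nat \<Rightarrow> nat set" where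
    f: "b_fold_oriented_coloring (cycle_vertices r) (cycle_arcs r) {..<k} b f"
    using assms(6) by blast
  interpret ctx r b k f using assms f by unfold_locales auto
  show ?thesis using main .
qed

end
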